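(* Let $\lambda=(\lambda_k)_{k\in\mathbb N}\in\ell^\infty(\mathbb N)$ and define $T_\lambda:\ell^\infty(\mathbb N)\to\ell^\infty(\mathbb N)$ by $T_\lambda(x_1,x_2,\ldots)=(\lambda_1x_1,\lambda_2x_2,\ldots)$. The following are equivalent: (i) $T_\lambda$ is recurrent; (ii) $T_\lambda$ is rigid; (iii) $T_\lambda$ is uniformly rigid; (iv) there is a sequence $(\theta_k)_{k\in\mathbb N}\subset\mathbb R$ with $\lambda_k=e^{2\pi i\theta_k}$ for every $k$, and $\liminf_{n\to\infty}\sup_{k\in\mathbb N}|e^{2\pi i n\theta_k}-1|=0$.
   Context: An operator $T$ on a Banach space $X$ is recurrent if for every non-empty open $U\subset X$ there is a positive integer $k$ with $U\cap T^{-k}(U)\neq\emptyset$; rigid if there is an increasing sequence of positive integers $(k_n)$ with $T^{k_n}x\to x$ for all $x\in X$; uniformly rigid if there is an increasing sequence of positive integers $(k_n)$ with $\|T^{k_n}-I\|\to0$. *)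

theory Defs
  imports "HOL-Analysis.Analysis"
begin

text \<open>The Banach space of bounded complex sequences, with the sup norm,
  is realised as the type of bounded continuous functions nat to complex
  (nat carries the discrete topology, so continuity is automatic).\<close>
type_synonym linf = "nat \<Rightarrow>\<^sub>C complex"

definition diag_op :: "linf \<Rightarrow> linf \<Rightarrow> linf" where
  "diag_op l x = Bcontfun (\<lambda>k. apply_bcontfun l k * apply_bcontfun x k)"

definition recurrent :: "('a::topological_space \<Rightarrow> 'a) \<Rightarrow> bool" where
  "recurrent T \<longleftrightarrow> (\<forall>U. open U \<and> U \<noteq> {} \<longrightarrow>
      (\<exists>k::nat. k > 0 \<and> U \<inter> (T ^^ k) -` U \<noteq> {}))"

definition rigid :: "('a::topological_space \<Rightarrow> 'a) \<Rightarrow> bool" where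
  "rigid T \<longleftrightarrow> (\<exists>kn::nat \<Rightarrow> nat. strict_mono kn \<and> (\<forall>n. kn n > 0) \<and>
      (\<forall>x. (\<lambda>n. (T ^^ kn n) x) \<longlonglongrightarrow> x))"

definition uniformly_rigid :: "('a::real_normed_vector \<Rightarrow> 'a) \<Rightarrow> bool" where
  "uniformly_rigid T \<longleftrightarrow> (\<exists>kn::nat \<Rightarrow> nat. strict_mono kn \<and> (\<forall>n. kn n > 0) \<and>
      (\<lambda>n. onorm (\<lambda>x. (T ^^ kn n) x - x)) \<longlonglongrightarrow> 0)"

end

theory Submission
  imports Defs
begin


lemma diag_apply: "apply_bcontfun (diag_op l x) k = apply_bcontfun l k * apply_bcontfun x k"
proof -
  have "(\<lambda>k. apply_bcontfun l k * apply_bcontfun x k) \<in> bcontfun"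
  proof (rule bcontfun_normI[where b="norm l * norm x"])
    show "continuous_on UNIV (\<lambda>k::nat. apply_bcontfun l k * apply_bcontfun x k)" by simp
    fix k show "norm (apply_bcontfun l k * apply_bcontfun x k) \<le> norm l * norm x"
      unfolding norm_mult by (intro mult_mono norm_bounded) auto
  qed
  then show ?thesis unfolding diag_op_def by (simp add: Bcontfun_inverse)
qed

lemma iter_apply: "apply_bcontfun ((diag_op l ^^ n) x) k = apply_bcontfun l k ^ n * apply_bcontfun x k"
  by (induction n) (auto simp: diag_apply)

definition sq :: "linf \<Rightarrow> nat \<Rightarrow> real" where
  "sq l n = (SUP j. cmod (apply_bcontfun l j ^ n - 1))"

lemma sq_bdd: "bdd_above (range (\<lambda>j. cmod (apply_bcontfun l j ^ n - 1)))"
proof (rule bdd_aboveI2)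
  fix j
  have "cmod (apply_bcontfun l j ^ n - 1) \<le> cmod (apply_bcontfun l j ^ n) + 1"
    by (metis norm_one norm_triangle_ineq4)
  also have "\<dots> \<le> norm l ^ n + 1"
    by (simp add: norm_power power_mono norm_bounded)
  finally show "cmod (apply_bcontfun l j ^ n - 1) \<le> norm l ^ n + 1" .
qed

lemma sq_upper: "cmod (apply_bcontfun l j ^ n - 1) \<le> sq l n"
  unfolding sq_def by (rule cSUP_upper[OF _ sq_bdd]) simp

lemma sq_nonneg: "0 \<le> sq l n"
  using sq_upper[of l 0 n] norm_ge_zero order_trans by blast

lemma norm_iter_diff: "norm ((diag_op l ^^ n) x - x) \<le> sq l n * norm x"
proof (rule norm_bound)
  fix k
  have "norm (apply_bcontfun ((diag_op l ^^ n) x - x) k) = cmod (apply_bcontfun l k ^ n - 1) * cmod (apply_bcontfun x k)"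
    by (simp add: iter_apply algebra_simps norm_mult[symmetric])
  also have "\<dots> \<le> sq l n * norm x"
    by (intro mult_mono sq_upper norm_bounded sq_nonneg) auto
  finally show "norm (apply_bcontfun ((diag_op l ^^ n) x - x) k) \<le> sq l n * norm x" .
qed

lemma bl_iter: "bounded_linear (\<lambda>x. (diag_op l ^^ n) x - x)"
proof (rule bounded_linear_intro[where K="sq l n"])
  fix x y :: linf and r :: real
  show "(diag_op l ^^ n) (x + y) - (x + y) = (diag_op l ^^ n) x - x + ((diag_op l ^^ n) y - y)"
    by (rule bcontfun_eqI) (simp add: iter_apply algebra_simps)
  show "(diag_op l ^^ n) (r *\<^sub>R x) - r *\<^sub>R x = r *\<^sub>R ((diag_op l ^^ n) x - x)"
    by (rule bcontfun_eqI) (simp add: iter_apply algebra_simps scaleR_conv_of_real)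
  show "norm ((diag_op l ^^ n) x - x) \<le> norm x * sq l n"
    using norm_iter_diff[where l=l and n=n and x=x] by (simp add: mult.commute)
qed

lemma norm_one_bc: "norm (const_bcontfun 1 :: linf) = 1"
proof (rule antisym)
  show "norm (const_bcontfun 1 :: linf) \<le> 1" by (rule norm_bound) simp
  show "1 \<le> norm (const_bcontfun 1 :: linf)"
    using norm_bounded[of "const_bcontfun 1 :: linf" 0] by simp
qed

lemma onorm_iter: "onorm (\<lambda>x. (diag_op l ^^ n) x - x) = sq l n"
proof (rule antisym)
  show "onorm (\<lambda>x. (diag_op l ^^ n) x - x) \<le> sq l n"
    by (rule onorm_bound[OF sq_nonneg norm_iter_diff])
  show "sq l n \<le> onorm (\<lambda>x. (diag_op l ^^ n) x - x)"
    unfolding sq_def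
  proof (rule cSUP_least)
    fix j
    have "cmod (apply_bcontfun l j ^ n - 1) = norm (apply_bcontfun ((diag_op l ^^ n) (const_bcontfun 1) - const_bcontfun 1) j)"
      by (simp add: iter_apply)
    also have "\<dots> \<le> norm ((diag_op l ^^ n) (const_bcontfun 1) - const_bcontfun 1)"
      by (rule norm_bounded)
    also have "\<dots> \<le> onorm (\<lambda>x. (diag_op l ^^ n) x - x) * norm (const_bcontfun 1 :: linf)"
      by (rule onorm[OF bl_iter])
    finally show "cmod (apply_bcontfun l j ^ n - 1) \<le> onorm (\<lambda>x. (diag_op l ^^ n) x - x)"
      by (simp add: norm_one_bc)
  qed simp
qed



lemma ur_iff: "uniformly_rigid (diag_op l) \<longleftrightarrow>
  (\<exists>kn::nat \<Rightarrow> nat. strict_mono kn \<and> (\<forall>n. kn n > 0) \<and> (\<lambda>n. sq l (kn n)) \<longlonglongrightarrow> 0)"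
  unfolding uniformly_rigid_def onorm_iter ..

lemma ur_imp_rigid: "uniformly_rigid (diag_op l) \<Longrightarrow> rigid (diag_op l)"
proof -
  assume "uniformly_rigid (diag_op l)"
  then obtain kn where kn: "strict_mono kn" "\<forall>n. kn n > 0" "(\<lambda>n. sq l (kn n)) \<longlonglongrightarrow> 0"
    unfolding ur_iff by blast
  have "(\<lambda>n. (diag_op l ^^ kn n) x) \<longlonglongrightarrow> x" for x
  proof -
    have "(\<lambda>n. (diag_op l ^^ kn n) x - x) \<longlonglongrightarrow> 0"
    proof (rule Lim_null_comparison)
      show "\<forall>\<^sub>F n in sequentially. norm ((diag_op l ^^ kn n) x - x) \<le> sq l (kn n) * norm x"
        by (simp add: norm_iter_diff)
      show "(\<lambda>n. sq l (kn n) * norm x) \<longlonglongrightarrow> 0"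
        using tendsto_mult_left_zero[OF kn(3)] by simp
    qed
    then show ?thesis by (rule LIM_zero_cancel)
  qed
  with kn show ?thesis unfolding rigid_def by blast
qed

lemma rigid_imp_rec: "rigid T \<Longrightarrow> recurrent T"
proof -
  assume "rigid T"
  then obtain kn where kn: "\<forall>n. kn n > (0::nat)" "\<forall>x. (\<lambda>n. (T ^^ kn n) x) \<longlonglongrightarrow> x"
    unfolding rigid_def by blast
  show ?thesis unfolding recurrent_def
  proof (intro allI impI)
    fix U :: "'a set" assume U: "open U \<and> U \<noteq> {}"
    then obtain x where x: "x \<in> U" by blast
    have "\<forall>\<^sub>F n in sequentially. (T ^^ kn n) x \<in> U"
      using topological_tendstoD[OF kn(2)[rule_format, of x]] U x by blast
    then obtain n where "(T ^^ kn n) x \<in> U" by (meson eventually_sequentially order.refl)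
    with x kn(1) show "\<exists>k>0. U \<inter> (T ^^ k) -` U \<noteq> {}" by blast
  qed
qed

lemma rec_key: "recurrent (diag_op l) \<Longrightarrow> \<delta> > 0 \<Longrightarrow> \<exists>k>0. \<exists>y::linf. \<forall>j.
   cmod (apply_bcontfun y j - 1) < \<delta> \<and> cmod (apply_bcontfun l j ^ k * apply_bcontfun y j - 1) < \<delta>"
proof -
  assume r: "recurrent (diag_op l)" and d: "\<delta> > 0"
  let ?U = "ball (const_bcontfun 1 :: linf) \<delta>"
  have "open ?U \<and> ?U \<noteq> {}" using d by simp
  with r obtain k where k: "k > 0" "?U \<inter> (diag_op l ^^ k) -` ?U \<noteq> {}"
    unfolding recurrent_def by blast
  then obtain y where y: "y \<in> ?U" "(diag_op l ^^ k) y \<in> ?U" by blast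
  have "cmod (apply_bcontfun y j - 1) < \<delta> \<and> cmod (apply_bcontfun l j ^ k * apply_bcontfun y j - 1) < \<delta>" for j
    using dist_fun_lt_imp_dist_val_lt[of "const_bcontfun 1" y \<delta> j]
      dist_fun_lt_imp_dist_val_lt[of "const_bcontfun 1" "(diag_op l ^^ k) y" \<delta> j] y
    by (auto simp: dist_norm iter_apply norm_minus_commute)
  with k show ?thesis by blast
qed

lemma aux_r2: "(r::real) > 1 \<Longrightarrow> \<delta> = (r-1)/(2*(r+1)) \<Longrightarrow> 1 + \<delta> \<le> r*(1-\<delta>)"
proof -
  assume r: "r > 1" and d: "\<delta> = (r-1)/(2*(r+1))"
  have "\<delta> * (r+1) = (r-1)/2" using r unfolding d by (simp add: divide_simps)
  then have "r * \<delta> + \<delta> = r/2 - 1/2" by (simp add: algebra_simps)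
  moreover have "r*(1-\<delta>) = r - r * \<delta>" by (simp add: algebra_simps)
  ultimately show ?thesis using r by linarith
qed

lemma key_unimod:
  assumes key: "\<And>\<delta>. \<delta> > 0 \<Longrightarrow> \<exists>k>0. \<exists>y::linf. \<forall>j.
   cmod (apply_bcontfun y j - 1) < \<delta> \<and> cmod (apply_bcontfun l j ^ k * apply_bcontfun y j - 1) < \<delta>"
  shows "cmod (apply_bcontfun l j) = 1"
proof -
  let ?r = "cmod (apply_bcontfun l j)"
  have bnd: "1 - \<delta> < ?r ^ k * cmod (apply_bcontfun y j) \<and> ?r ^ k * cmod (apply_bcontfun y j) < 1 + \<delta>
     \<and> 1 - \<delta> < cmod (apply_bcontfun y j) \<and> cmod (apply_bcontfun y j) < 1 + \<delta>"
    if "cmod (apply_bcontfun y j - 1) < \<delta>" "cmod (apply_bcontfun l j ^ k * apply_bcontfun y j - 1) < \<delta>"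
    for y :: linf and k \<delta>
  proof -
    have e: "?r ^ k * cmod (apply_bcontfun y j) = cmod (apply_bcontfun l j ^ k * apply_bcontfun y j)"
      by (simp add: norm_mult norm_power)
    have t: "\<bar>cmod w - 1\<bar> \<le> cmod (w - 1)" for w :: complex
      by (metis norm_one norm_triangle_ineq3)
    show ?thesis unfolding e using that t[of "apply_bcontfun y j"]
      t[of "apply_bcontfun l j ^ k * apply_bcontfun y j"] by (auto simp: abs_le_iff)
  qed
  show ?thesis
  proof (rule ccontr)
    assume ne: "?r \<noteq> 1"
    show False
    proof (cases "?r < 1")
      case True
      define \<delta> where "\<delta> = (1 - ?r) / 4"
      have "\<delta> > 0" using True by (simp add: \<delta>_def)
      from key[OF this] obtain k y where k: "k > 0" and y: "\<forall>j.
        cmod (apply_bcontfun y j - 1) < \<delta> \<and> cmod (apply_bcontfun l j ^ k * apply_bcontfun y j - 1) < \<delta>"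
        by blast
      from bnd[of y \<delta> k] y have b: "1 - \<delta> < ?r ^ k * cmod (apply_bcontfun y j)"
        "cmod (apply_bcontfun y j) < 1 + \<delta>" by auto
      have "?r ^ k \<le> ?r ^ 1" using True k by (intro power_decreasing) auto
      then have "?r ^ k * cmod (apply_bcontfun y j) \<le> ?r * (1 + \<delta>)"
        using b(2) by (intro mult_mono) auto
      also have "\<dots> \<le> 1 - \<delta>"
      proof -
        have "?r * \<delta> \<le> \<delta>" using True \<open>\<delta> > 0\<close> by (intro mult_left_le_one_le) auto
        moreover have "?r * (1 + \<delta>) = ?r + ?r * \<delta>" by (simp add: distrib_left)
        moreover have "\<delta> * 4 = 1 - ?r" by (simp add: \<delta>_def)
        ultimately show ?thesis using \<open>\<delta> > 0\<close> by linarith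
      qed
      finally show False using b(1) by simp
    next
      case False
      then have r1: "?r > 1" using ne by simp
      define \<delta> where "\<delta> = (?r - 1) / (2 * (?r + 1))"
      have "\<delta> > 0" using r1 by (simp add: \<delta>_def)
      from key[OF this] obtain k y where k: "k > 0" and y: "\<forall>j.
        cmod (apply_bcontfun y j - 1) < \<delta> \<and> cmod (apply_bcontfun l j ^ k * apply_bcontfun y j - 1) < \<delta>"
        by blast
      from bnd[of y \<delta> k] y have b: "?r ^ k * cmod (apply_bcontfun y j) < 1 + \<delta>"
        "1 - \<delta> < cmod (apply_bcontfun y j)" by auto
      have "\<delta> < 1" using r1 by (simp add: \<delta>_def)
      have "1 + \<delta> \<le> ?r * (1 - \<delta>)" by (rule aux_r2[OF r1 \<delta>_def])
      also have "\<dots> \<le> ?r ^ k * cmod (apply_bcontfun y j)"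
      proof (intro mult_mono)
        show "?r \<le> ?r ^ k" using r1 k power_increasing[of 1 k ?r] by simp
      qed (use b \<open>\<delta> < 1\<close> r1 in auto)
      finally show False using b(1) by simp
    qed
  qed
qed



lemma rec_small:
  assumes r: "recurrent (diag_op l)" and e: "\<epsilon> > 0"
  shows "\<exists>k>0. sq l k < \<epsilon>"
proof -
  have u: "cmod (apply_bcontfun l j) = 1" for j
    by (rule key_unimod) (rule rec_key[OF r])
  from rec_key[OF r, of "\<epsilon>/4"] e obtain k y where k: "k > 0" and y: "\<forall>j.
   cmod (apply_bcontfun y j - 1) < \<epsilon>/4 \<and> cmod (apply_bcontfun l j ^ k * apply_bcontfun y j - 1) < \<epsilon>/4"
    by auto
  have "sq l k \<le> \<epsilon>/2" unfolding sq_def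
  proof (rule cSUP_least)
    fix j
    let ?a = "apply_bcontfun l j ^ k" and ?z = "apply_bcontfun y j"
    have "cmod (?a - 1) \<le> cmod (?a - ?a * ?z) + cmod (?a * ?z - 1)"
      using norm_triangle_ineq[of "?a - ?a * ?z" "?a * ?z - 1"] by simp
    also have "cmod (?a - ?a * ?z) = cmod (1 - ?z)"
    proof -
      have "?a - ?a * ?z = ?a * (1 - ?z)" by (simp add: algebra_simps)
      then show ?thesis by (simp add: norm_mult norm_power u)
    qed
    finally show "cmod (?a - 1) \<le> \<epsilon>/2" using y[rule_format, of j]
      by (simp add: norm_minus_commute)
  qed simp
  with k e show ?thesis by (intro exI[of _ k]) auto
qed

lemma sq_zero_mult: "sq l m = 0 \<Longrightarrow> sq l (m * n) = 0"
proof -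
  assume z: "sq l m = 0"
  have "apply_bcontfun l j ^ m = 1" for j
    using sq_upper[of l j m] z by simp
  then have "apply_bcontfun l j ^ (m * n) = 1" for j by (simp add: power_mult)
  then have "sq l (m * n) \<le> 0" unfolding sq_def by (intro cSUP_least) auto
  with sq_nonneg show ?thesis by (rule antisym[rotated])
qed

lemma rec_freq:
  assumes r: "recurrent (diag_op l)" and e: "\<epsilon> > 0"
  shows "\<exists>n\<ge>N. sq l n < \<epsilon>"
proof (cases "\<exists>m>0. sq l m = 0")
  case True
  then obtain m where m: "m > 0" "sq l m = 0" by blast
  have "m * (N+1) \<ge> N" 
  proof -
    have "1 * (N+1) \<le> m * (N+1)" using m(1) by (intro mult_le_mono1) simp
    then show ?thesis by simp
  qed
  moreover have "sq l (m * (N+1)) < \<epsilon>" using sq_zero_mult[OF m(2), of "N+1"] e by (simp only:)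
  ultimately show ?thesis by blast
next
  case False
  define c where "c = Min (insert \<epsilon> (sq l ` {1..N}))"
  have pos: "sq l m > 0" if "m \<in> {1..N}" for m
  proof -
    have "m > 0" using that by auto
    then have "sq l m \<noteq> 0" using False by blast
    with sq_nonneg[of l m] show ?thesis by linarith
  qed
  have c0: "c > 0" unfolding c_def using pos e by (subst Min_gr_iff) auto
  obtain n where n: "n > 0" "sq l n < c" using rec_small[OF r c0] by blast
  have "n > N"
  proof (rule ccontr)
    assume "\<not> n > N"
    then have "sq l n \<in> insert \<epsilon> (sq l ` {1..N})" using n(1) by auto
    then have "c \<le> sq l n" unfolding c_def by (intro Min_le) auto
    with n show False by simp
  qed
  moreover have "c \<le> \<epsilon>" unfolding c_def by (intro Min_le) auto
  ultimately show ?thesis using n by (intro exI[of _ n]) auto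
qed

lemma liminf_ge0: "0 \<le> liminf (\<lambda>n. ereal (sq l n))"
  by (rule Liminf_bounded) (simp add: sq_nonneg)

lemma rec_liminf: "recurrent (diag_op l) \<Longrightarrow> liminf (\<lambda>n. ereal (sq l n)) = 0"
proof (rule antisym[OF _ liminf_ge0])
  assume r: "recurrent (diag_op l)"
  show "liminf (\<lambda>n. ereal (sq l n)) \<le> 0"
    unfolding liminf_SUP_INF
  proof (rule SUP_least)
    fix N :: nat
    show "(INF m\<in>{N..}. ereal (sq l m)) \<le> 0"
    proof (rule ereal_le_epsilon2)
      fix e :: real assume "0 < e"
      from rec_freq[OF r this, of N] obtain n where "n \<ge> N" "sq l n < e" by blast
      then show "(INF m\<in>{N..}. ereal (sq l m)) \<le> 0 + ereal e"
        by (intro INF_lower2[of n]) auto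
    qed
  qed
qed

lemma liminf_ur: "liminf (\<lambda>n. ereal (sq l n)) = 0 \<Longrightarrow> uniformly_rigid (diag_op l)"
proof -
  assume li: "liminf (\<lambda>n. ereal (sq l n)) = 0"
  obtain r where r: "strict_mono r" "((\<lambda>n. ereal (sq l n)) \<circ> r) \<longlonglongrightarrow> liminf (\<lambda>n. ereal (sq l n))"
    using liminf_subseq_lim by blast
  then have "(\<lambda>n. sq l (r n)) \<longlonglongrightarrow> 0" using li by (simp add: o_def zero_ereal_def)
  then have t: "(\<lambda>n. sq l (r (Suc n))) \<longlonglongrightarrow> 0" by (rule LIMSEQ_Suc)
  have sm: "strict_mono (\<lambda>n. r (Suc n))" using r(1) by (simp add: strict_mono_def)
  have "r (Suc n) > 0" for n using r(1) by (metis le0 le_less_trans lessI strict_mono_def)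
  then have "\<forall>n. r (Suc n) > 0" by blast
  with t sm have "\<exists>kn::nat \<Rightarrow> nat. strict_mono kn \<and> (\<forall>n. kn n > 0) \<and> (\<lambda>n. sq l (kn n)) \<longlonglongrightarrow> 0"
    by (intro exI[of _ "\<lambda>n. r (Suc n)"]) simp
  then show ?thesis by (simp only: ur_iff)
qed

lemma ur_liminf: "uniformly_rigid (diag_op l) \<Longrightarrow> liminf (\<lambda>n. ereal (sq l n)) = 0"
  by (rule rec_liminf[OF rigid_imp_rec[OF ur_imp_rigid]])

lemma rec_unimod: "recurrent (diag_op l) \<Longrightarrow> cmod (apply_bcontfun l j) = 1"
  by (rule key_unimod) (rule rec_key)



lemma theta_sq:
  assumes "\<forall>k. apply_bcontfun l k = exp (2 * pi * \<i> * complex_of_real (\<theta> k))"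
  shows "(\<lambda>n::nat. ereal (SUP k::nat.
               cmod (exp (2 * pi * \<i> * of_nat n * complex_of_real (\<theta> k)) - 1))) = (\<lambda>n. ereal (sq l n))"
proof -
  have "exp (2 * pi * \<i> * of_nat n * complex_of_real (\<theta> k)) = apply_bcontfun l k ^ n" for n k
  proof -
    have "exp (2 * pi * \<i> * of_nat n * complex_of_real (\<theta> k)) = exp (of_nat n * (2 * pi * \<i> * complex_of_real (\<theta> k)))"
      by (simp add: algebra_simps)
    also have "\<dots> = apply_bcontfun l k ^ n" by (simp add: exp_of_nat_mult assms)
    finally show ?thesis .
  qed
  then show ?thesis by (simp add: sq_def)
qed

lemma unimod_theta:
  assumes "cmod z = 1"
  shows "z = exp (2 * pi * \<i> * complex_of_real (Arg z / (2 * pi)))"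
proof -
  have z0: "z \<noteq> 0" using assms by auto
  have "2 * pi * \<i> * complex_of_real (Arg z / (2 * pi)) = \<i> * complex_of_real (Arg z)"
    by (simp add: field_simps)
  then show ?thesis using Arg_eq[OF z0] assms by simp
qed

theorem theorem5p3:
  fixes l :: linf
  shows "(recurrent (diag_op l) \<longleftrightarrow> rigid (diag_op l))
    \<and> (rigid (diag_op l) \<longleftrightarrow> uniformly_rigid (diag_op l))
    \<and> (uniformly_rigid (diag_op l) \<longleftrightarrow>
         (\<exists>\<theta>::nat \<Rightarrow> real.
            (\<forall>k. apply_bcontfun l k = exp (2 * pi * \<i> * complex_of_real (\<theta> k)))
          \<and> liminf (\<lambda>n::nat. ereal (SUP k::nat.
               cmod (exp (2 * pi * \<i> * of_nat n * complex_of_real (\<theta> k)) - 1))) = 0))"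
proof -
  have r2u: "recurrent (diag_op l) \<Longrightarrow> uniformly_rigid (diag_op l)"
    by (rule liminf_ur[OF rec_liminf])
  have u2r: "uniformly_rigid (diag_op l) \<Longrightarrow> recurrent (diag_op l)"
    by (rule rigid_imp_rec[OF ur_imp_rigid])
  have iv: "uniformly_rigid (diag_op l) \<longleftrightarrow>
         (\<exists>\<theta>::nat \<Rightarrow> real.
            (\<forall>k. apply_bcontfun l k = exp (2 * pi * \<i> * complex_of_real (\<theta> k)))
          \<and> liminf (\<lambda>n::nat. ereal (SUP k::nat.
               cmod (exp (2 * pi * \<i> * of_nat n * complex_of_real (\<theta> k)) - 1))) = 0)"
  proof
    assume u: "uniformly_rigid (diag_op l)"
    define \<theta> where "\<theta> k = Arg (apply_bcontfun l k) / (2 * pi)" for k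
    have th: "\<forall>k. apply_bcontfun l k = exp (2 * pi * \<i> * complex_of_real (\<theta> k))"
    proof
      fix k show "apply_bcontfun l k = exp (2 * pi * \<i> * complex_of_real (\<theta> k))"
        unfolding \<theta>_def by (rule unimod_theta[OF rec_unimod[OF u2r[OF u]]])
    qed
    show "\<exists>\<theta>::nat \<Rightarrow> real.
            (\<forall>k. apply_bcontfun l k = exp (2 * pi * \<i> * complex_of_real (\<theta> k)))
          \<and> liminf (\<lambda>n::nat. ereal (SUP k::nat.
               cmod (exp (2 * pi * \<i> * of_nat n * complex_of_real (\<theta> k)) - 1))) = 0"
    proof (rule exI[of _ \<theta>], rule conjI[OF th])
      show "liminf (\<lambda>n::nat. ereal (SUP k::nat.
               cmod (exp (2 * pi * \<i> * of_nat n * complex_of_real (\<theta> k)) - 1))) = 0"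
        unfolding theta_sq[OF th] by (rule ur_liminf[OF u])
    qed
  next
    assume "\<exists>\<theta>::nat \<Rightarrow> real.
            (\<forall>k. apply_bcontfun l k = exp (2 * pi * \<i> * complex_of_real (\<theta> k)))
          \<and> liminf (\<lambda>n::nat. ereal (SUP k::nat.
               cmod (exp (2 * pi * \<i> * of_nat n * complex_of_real (\<theta> k)) - 1))) = 0"
    then show "uniformly_rigid (diag_op l)"
    proof (elim exE conjE)
      fix \<theta> :: "nat \<Rightarrow> real"
      assume th: "\<forall>k. apply_bcontfun l k = exp (2 * pi * \<i> * complex_of_real (\<theta> k))"
        and li: "liminf (\<lambda>n::nat. ereal (SUP k::nat.
               cmod (exp (2 * pi * \<i> * of_nat n * complex_of_real (\<theta> k)) - 1))) = 0"
      show "uniformly_rigid (diag_op l)" by (rule liminf_ur) (use li in \<open>simp only: theta_sq[OF th]\<close>)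
    qed
  qed
  have r2: "rigid (diag_op l) \<Longrightarrow> recurrent (diag_op l)" by (rule rigid_imp_rec)
  have u2: "uniformly_rigid (diag_op l) \<Longrightarrow> rigid (diag_op l)" by (rule ur_imp_rigid)
  show ?thesis
  proof (intro conjI)
    show "recurrent (diag_op l) = rigid (diag_op l)"
      using r2u u2 r2 by (intro iffI) auto
    show "rigid (diag_op l) = uniformly_rigid (diag_op l)"
      using r2u u2 r2 by (intro iffI) auto
  qed (rule iv)
qed

end
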